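(* Let $n\geq 3$, $a>1$, $p,q\in\mathbb{R}$, and let $f_t(x)$, $x\in[1,a]$, solve $$\dot f=u''(x)\left(\frac{f''}{1+f'^2}+(n-1)\frac{xf'-f}{x^2+f^2}\right),\qquad f_t(1)=q,\ f_t(a)=p,$$ where $f_0$ satisfies the supercritical phase assumption $(n-1)\arctan\left(\frac{f_0}{x}\right)+\arctan(f_0')>(n-2)\frac{\pi}{2}$. Then there exists a uniform constant $C$ such that $f_t'(x)>-C$ for all $x\in[1,a]$ and all $t\geq 0$ for which the flow is defined.
   Context: This is the line bundle mean curvature flow on the blowup of $\mathbb{P}^n$ at a point under Calabi symmetry, written in the Legendre coordinate $x\in[1,a]$: $u''$ is the smooth function of $x$ coming from the Calabi-symmetric K\"ahler form $\omega=i\partial\bar\partial u$ in $a[H]-[E]$ (positive on $(1,a)$, vanishing at the endpoints), and $f$ encodes a Calabi-symmetric form $\alpha_t$ in $p[H]-q[E]$ whose eigenvalues relative to $\omega$ are $f/x$ (multiplicity $n-1$) and $f'$, so its angle is $\Theta=(n-1)\arctan(f/x)+\arctan(f')$. *)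

theory Defs
  imports "HOL-Analysis.Analysis" "HOL-Library.Extended_Real"
begin

definition time_dom :: "ereal \<Rightarrow> real set" where
  "time_dom T = {t. 0 \<le> t \<and> ereal t < T}"

definition smooth_on_interval :: "(real \<Rightarrow> real) \<Rightarrow> real set \<Rightarrow> bool" where
  "smooth_on_interval g I \<longleftrightarrow>
     (\<exists>D :: nat \<Rightarrow> real \<Rightarrow> real. D 0 = g \<and>
        (\<forall>k. \<forall>x\<in>I. (D k has_real_derivative D (Suc k) x) (at x within I)))"

definition smooth_on_strip :: "(real \<Rightarrow> real \<Rightarrow> real) \<Rightarrow> real set \<Rightarrow> real set \<Rightarrow> bool" where
  "smooth_on_strip g J I \<longleftrightarrow>
     (\<exists>D :: nat \<Rightarrow> nat \<Rightarrow> real \<Rightarrow> real \<Rightarrow> real. D 0 0 = g \<and>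
        (\<forall>i j. continuous_on (J \<times> I) (\<lambda>(t,x). D i j t x)) \<and>
        (\<forall>i j. \<forall>t\<in>J. \<forall>x\<in>I.
            ((\<lambda>s. D i j s x) has_real_derivative D (Suc i) j t x) (at t within J) \<and>
            ((\<lambda>y. D i j t y) has_real_derivative D i (Suc j) t x) (at x within I)))"

end

theory Submission
  imports Defs
begin

lemma deriv_unique_Icc:
  fixes g :: "real \<Rightarrow> real"
  assumes lu: "l < u" and x: "x \<in> {l..u}"
    and d1: "(g has_real_derivative d1) (at x within {l..u})"
    and d2: "(g has_real_derivative d2) (at x within {l..u})"
  shows "d1 = d2"
proof (cases "x < u")
  case True
  have s: "{x..u} \<subseteq> {l..u}" using x by auto
  have "((\<lambda>y. (g y - g x) / (y - x)) \<longlongrightarrow> d1) (at_right x)"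
    using DERIV_subset[OF d1 s] True by (simp add: has_field_derivative_iff at_within_Icc_at_right)
  moreover have "((\<lambda>y. (g y - g x) / (y - x)) \<longlongrightarrow> d2) (at_right x)"
    using DERIV_subset[OF d2 s] True by (simp add: has_field_derivative_iff at_within_Icc_at_right)
  ultimately show ?thesis using tendsto_unique trivial_limit_at_right_real by blast
next
  case False
  then have xu: "x = u" using x by auto
  have "((\<lambda>y. (g y - g x) / (y - x)) \<longlongrightarrow> d1) (at_left x)"
    using d1 xu lu by (simp add: has_field_derivative_iff at_within_Icc_at_left)
  moreover have "((\<lambda>y. (g y - g x) / (y - x)) \<longlongrightarrow> d2) (at_left x)"
    using d2 xu lu by (simp add: has_field_derivative_iff at_within_Icc_at_left)
  ultimately show ?thesis using tendsto_unique trivial_limit_at_left_real by blast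
qed

lemma alg1:
  fixes x F P :: real assumes "x \<noteq> 0"
  shows "inverse (1 + (F / x)\<^sup>2) * ((P * x - F * 1) / (x * x)) = (x * P - F) / (x\<^sup>2 + F\<^sup>2)"
proof -
  have p2: "x\<^sup>2 + F\<^sup>2 \<noteq> 0" using assms by (simp add: add_nonneg_eq_0_iff)
  have "1 + (F / x)\<^sup>2 = (x\<^sup>2 + F\<^sup>2) / x\<^sup>2" using assms by (simp add: field_simps)
  then have "inverse (1 + (F / x)\<^sup>2) = x\<^sup>2 / (x\<^sup>2 + F\<^sup>2)" by simp
  then have "inverse (1 + (F / x)\<^sup>2) * ((P * x - F * 1) / (x * x)) = (x\<^sup>2 / (x * x)) * ((P * x - F) / (x\<^sup>2 + F\<^sup>2))"
    by simp
  also have "\<dots> = (x * P - F) / (x\<^sup>2 + F\<^sup>2)" using assms by (simp add: power2_eq_square mult.commute)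
  finally show ?thesis .
qed

lemma test_deriv:
  fixes f fx fxx :: "real \<Rightarrow> real" and c :: real
  assumes x: "x \<ge> 1"
    and d1: "(f has_real_derivative fx x) (at x within S)"
    and d2: "(fx has_real_derivative fxx x) (at x within S)"
  shows "((\<lambda>y. c * arctan (f y / y) + arctan (fx y)) has_real_derivative
      (fxx x / (1 + (fx x)\<^sup>2) + c * (x * fx x - f x) / (x\<^sup>2 + (f x)\<^sup>2))) (at x within S)"
proof -
  have "((\<lambda>y. c * arctan (f y / y) + arctan (fx y)) has_real_derivative
      (c * (inverse (1 + (f x / x)\<^sup>2) * ((fx x * x - f x * 1) / (x * x))) + inverse (1 + (fx x)\<^sup>2) * fxx x)) (at x within S)"
  proof -
    have a: "((\<lambda>y. f y / y) has_real_derivative ((fx x * x - f x * 1) / (x * x))) (at x within S)"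
      using x by (intro DERIV_divide d1 DERIV_ident) auto
    show ?thesis
      by (intro DERIV_add DERIV_cmult DERIV_arctan[THEN DERIV_chain2] a d2)
  qed
  moreover have "c * (inverse (1 + (f x / x)\<^sup>2) * ((fx x * x - f x * 1) / (x * x))) + inverse (1 + (fx x)\<^sup>2) * fxx x
     = fxx x / (1 + (fx x)\<^sup>2) + c * (x * fx x - f x) / (x\<^sup>2 + (f x)\<^sup>2)"
    using alg1[of x "f x" "fx x"] x by (simp add: divide_inverse mult.commute)
  ultimately show ?thesis by simp
qed
theorem lemma4p4:
  fixes n :: nat and a p q :: real and U :: "real \<Rightarrow> real"
    and f ft fx fxx :: "real \<Rightarrow> real \<Rightarrow> real" and T :: ereal
  assumes n3: "n \<ge> 3"
    and a1: "a > 1"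
    and U_smooth: "smooth_on_interval U {1..a}"
    and U_pos: "\<forall>x\<in>{1<..<a}. U x > 0"
    and U_ends: "U 1 = 0" "U a = 0"
    and T_pos: "T > 0"
    and f_smooth: "smooth_on_strip f (time_dom T) {1..a}"
    and ft_deriv: "\<forall>t\<in>time_dom T. \<forall>x\<in>{1..a}.
           ((\<lambda>s. f s x) has_real_derivative ft t x) (at t within time_dom T)"
    and fx_deriv: "\<forall>t\<in>time_dom T. \<forall>x\<in>{1..a}.
           (f t has_real_derivative fx t x) (at x within {1..a})"
    and fxx_deriv: "\<forall>t\<in>time_dom T. \<forall>x\<in>{1..a}.
           (fx t has_real_derivative fxx t x) (at x within {1..a})"
    and flow: "\<forall>t\<in>time_dom T. \<forall>x\<in>{1..a}.
           ft t x = U x * (fxx t x / (1 + (fx t x)\<^sup>2)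
                     + (real n - 1) * (x * fx t x - f t x) / (x\<^sup>2 + (f t x)\<^sup>2))"
    and bc_left: "\<forall>t\<in>time_dom T. f t 1 = q"
    and bc_right: "\<forall>t\<in>time_dom T. f t a = p"
    and supercritical: "\<forall>x\<in>{1..a}.
           (real n - 1) * arctan (f 0 x / x) + arctan (fx 0 x) > (real n - 2) * (pi / 2)"
  shows "\<exists>C. \<forall>t\<in>time_dom T. \<forall>x\<in>{1..a}. fx t x > - C"
proof -
  define dom where "dom = time_dom T"
  define c where "c = real n - 1"
  define Th where "Th = (\<lambda>t x. c * arctan (f t x / x) + arctan (fx t x))"
  define G where "G = (\<lambda>t x. fxx t x / (1 + (fx t x)\<^sup>2) + c * (x * fx t x - f t x) / (x\<^sup>2 + (f t x)\<^sup>2))"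
  have c_pos: "c > 0" using n3 unfolding c_def by simp
  obtain D :: "nat \<Rightarrow> nat \<Rightarrow> real \<Rightarrow> real \<Rightarrow> real" where D00: "D 0 0 = f"
    and Dcont0: "\<forall>i j. continuous_on (time_dom T \<times> {1..a}) (\<lambda>(t,x). D i j t x)"
    and Dall: "\<forall>i j. \<forall>t\<in>time_dom T. \<forall>x\<in>{1..a}.
            ((\<lambda>s. D i j s x) has_real_derivative D (Suc i) j t x) (at t within time_dom T) \<and>
            ((\<lambda>y. D i j t y) has_real_derivative D i (Suc j) t x) (at x within {1..a})"
    using f_smooth unfolding smooth_on_strip_def by blast
  have Dcont: "\<And>i j. continuous_on (dom \<times> {1..a}) (\<lambda>(t,x). D i j t x)"
    using Dcont0 unfolding dom_def by blast
  have Dt: "\<And>i j t x. t \<in> dom \<Longrightarrow> x \<in> {1..a} \<Longrightarrow>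
            ((\<lambda>s. D i j s x) has_real_derivative D (Suc i) j t x) (at t within dom)"
    using Dall unfolding dom_def by blast
  have Dx: "\<And>i j t x. t \<in> dom \<Longrightarrow> x \<in> {1..a} \<Longrightarrow>
            ((\<lambda>y. D i j t y) has_real_derivative D i (Suc j) t x) (at x within {1..a})"
    using Dall unfolding dom_def by blast
  have dom_iff: "\<And>t. t \<in> dom \<longleftrightarrow> 0 \<le> t \<and> ereal t < T" unfolding dom_def time_dom_def by simp
  have zero_dom: "0 \<in> dom" using T_pos by (simp add: dom_iff zero_ereal_def)
  have sub_dom: "{0..t} \<subseteq> dom" if "t \<in> dom" for t
  proof
    fix s assume "s \<in> {0..t}"
    then have "0 \<le> s" "ereal s \<le> ereal t" by auto
    then show "s \<in> dom" using that dom_iff le_less_trans by blast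
  qed
  have fxD: "fx t x = D 0 1 t x" if t: "t \<in> dom" and x: "x \<in> {1..a}" for t x
  proof -
    have "(f t has_real_derivative fx t x) (at x within {1..a})" using fx_deriv t x unfolding dom_def by blast
    moreover have "(f t has_real_derivative D 0 1 t x) (at x within {1..a})"
      using Dx[OF t x, of 0 0] D00 by simp
    ultimately show ?thesis by (rule deriv_unique_Icc[OF a1 x])
  qed
  have ftD: "ft t x = D 1 0 t x" if t: "t \<in> dom" and tp: "t > 0" and x: "x \<in> {1..a}" for t x
  proof -
    have "((\<lambda>s. f s x) has_real_derivative ft t x) (at t within {0..t})"
    proof -
      have "((\<lambda>s. f s x) has_real_derivative ft t x) (at t within dom)" using ft_deriv t x unfolding dom_def by blast
      then show ?thesis using DERIV_subset sub_dom[OF t] by blast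
    qed
    moreover have "((\<lambda>s. f s x) has_real_derivative D 1 0 t x) (at t within {0..t})"
      using DERIV_subset[OF Dt[OF t x, of 0 0] sub_dom[OF t]] D00 by simp
    moreover have tin: "t \<in> {0..t}" using tp by simp
    ultimately show ?thesis using deriv_unique_Icc[OF tp tin] by blast
  qed
  have Thx: "(Th t has_real_derivative G t x) (at x within {1..a})" if t: "t \<in> dom" and x: "x \<in> {1..a}" for t x
  proof -
    have "((\<lambda>y. c * arctan (f t y / y) + arctan (fx t y)) has_real_derivative G t x) (at x within {1..a})"
    proof -
      have "(f t has_real_derivative fx t x) (at x within {1..a})" using fx_deriv t x unfolding dom_def by blast
      moreover have "(fx t has_real_derivative fxx t x) (at x within {1..a})" using fxx_deriv t x unfolding dom_def by blast
      moreover have "x \<ge> 1" using x by simp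
      ultimately show ?thesis unfolding G_def using test_deriv[where x=x and f="f t" and S="{1..a}" and fx="fx t" and fxx="fxx t" and c=c] by blast
    qed
    then show ?thesis unfolding Th_def by simp
  qed
  have Thcont: "continuous_on {1..a} (Th t)" if t: "t \<in> dom" for t
    unfolding continuous_on_eq_continuous_within using Thx[OF t] DERIV_continuous by blast
  have Tht: "((\<lambda>s. Th s x) has_real_derivative
      c * (inverse (1 + (f t x / x)\<^sup>2) * ((ft t x * x - f t x * 0) / (x * x))) + inverse (1 + (fx t x)\<^sup>2) * D 1 1 t x)
      (at t within dom)" if t: "t \<in> dom" and x: "x \<in> {1..a}" for t x
  proof -
    have d1: "((\<lambda>s. f s x) has_real_derivative ft t x) (at t within dom)" using ft_deriv t x dom_def by auto
    have d2: "((\<lambda>s. fx s x) has_real_derivative D 1 1 t x) (at t within dom)"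
    proof (rule has_field_derivative_transform_within)
      show "((\<lambda>s. D 0 1 s x) has_real_derivative D 1 1 t x) (at t within dom)" using Dt[OF t x, of 0 1] by simp
      show "(0::real) < 1" by simp
      show "t \<in> dom" by (rule t)
      show "D 0 1 s x = fx s x" if "s \<in> dom" "dist s t < 1" for s using fxD[OF that(1) x] by simp
    qed
    have a: "((\<lambda>s. f s x / x) has_real_derivative ((ft t x * x - f t x * 0) / (x * x))) (at t within dom)"
      using x by (intro DERIV_divide d1 DERIV_const) auto
    show ?thesis unfolding Th_def
      by (intro DERIV_add DERIV_cmult DERIV_arctan[THEN DERIV_chain2] a d2)
  qed
  have Th_strip: "continuous_on (dom \<times> {1..a}) (\<lambda>z. Th (fst z) (snd z))"
  proof -
    have c0: "continuous_on (dom \<times> {1..a}) (\<lambda>z. D 0 0 (fst z) (snd z))"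
      using Dcont[of 0 0] by (simp add: case_prod_beta')
    have c1: "continuous_on (dom \<times> {1..a}) (\<lambda>z. D 0 1 (fst z) (snd z))"
      using Dcont[of 0 1] by (simp add: case_prod_beta')
    have "continuous_on (dom \<times> {1..a}) (\<lambda>z. c * arctan (D 0 0 (fst z) (snd z) / snd z) + arctan (D 0 1 (fst z) (snd z)))"
      by (intro continuous_intros c0 c1) auto
    moreover have "\<And>z. z \<in> dom \<times> {1..a} \<Longrightarrow> c * arctan (D 0 0 (fst z) (snd z) / snd z) + arctan (D 0 1 (fst z) (snd z)) = Th (fst z) (snd z)"
      unfolding Th_def using fxD D00 by (auto simp: mem_Times_iff)
    ultimately show ?thesis by (rule continuous_on_eq)
  qed
  obtain x0 where x0: "x0 \<in> {1..a}" and x0min: "\<And>x. x \<in> {1..a} \<Longrightarrow> Th 0 x0 \<le> Th 0 x"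
    using continuous_attains_inf[OF compact_Icc _ Thcont[OF zero_dom]] a1 by auto
  define m0 where "m0 = Th 0 x0"
  have m0_gt: "m0 > (real n - 2) * (pi / 2)"
    using supercritical x0 unfolding m0_def Th_def c_def by auto
  have main: "Th t x > m0 - e * (1 + t)" if e: "e > 0" and t: "t \<in> dom" and x: "x \<in> {1..a}" for e t x
  proof (rule ccontr)
    assume "\<not> ?thesis"
    then have bad1: "Th t x + e * (1 + t) \<le> m0" by simp
    have t0: "0 \<le> t" using t dom_iff by simp
    define S where "S = {0..t} \<times> {1..a}"
    define g where "g = (\<lambda>z. Th (fst z) (snd z) + e * (1 + fst z))"
    define K where "K = S \<inter> g -` {..m0}"
    have SD: "S \<subseteq> dom \<times> {1..a}" unfolding S_def using sub_dom[OF t] by auto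
    have gcont: "continuous_on S g" unfolding g_def
      by (intro continuous_intros continuous_on_subset[OF Th_strip SD])
    have "closed (S \<inter> g -` {..m0})"
      by (rule continuous_closed_preimage[OF gcont]) (auto simp: S_def intro: closed_Times)
    moreover have "compact S" unfolding S_def by (intro compact_Times compact_Icc)
    ultimately have Kc: "compact K" unfolding K_def
      using compact_Int_closed[of S "S \<inter> g -` {..m0}"] by (simp add: Int_absorb1 inf.absorb2)
    have tK: "(t, x) \<in> K" unfolding K_def S_def g_def using bad1 t0 x by auto
    have "\<exists>z\<in>K. \<forall>y\<in>K. fst z \<le> fst y"
      using continuous_attains_inf[OF Kc _ continuous_on_fst[OF continuous_on_id]] tK by blast
    then obtain z where zK: "z \<in> K" and zmin: "\<And>y. y \<in> K \<Longrightarrow> fst z \<le> fst y" by blast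
    define ts where "ts = fst z"
    define xs where "xs = snd z"
    have ts0: "0 \<le> ts" and tst: "ts \<le> t" and xs: "xs \<in> {1..a}" and badz: "Th ts xs + e * (1 + ts) \<le> m0"
      using zK unfolding K_def S_def g_def ts_def xs_def by (auto simp: mem_Times_iff)
    have tsD: "ts \<in> dom" using sub_dom[OF t] ts0 tst by auto
    have below: "Th s y > m0 - e * (1 + s)" if "0 \<le> s" "s < ts" "y \<in> {1..a}" for s y
    proof (rule ccontr)
      assume "\<not> ?thesis"
      then have "(s, y) \<in> K" unfolding K_def S_def g_def using that tst by auto
      then have "ts \<le> s" using zmin unfolding ts_def by fastforce
      then show False using that by simp
    qed
    have tspos: "ts > 0"
    proof (rule ccontr)
      assume "\<not> ?thesis"
      then have "ts = 0" using ts0 by simp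
      then have "Th 0 xs \<le> m0 - e" using badz by simp
      moreover have "m0 \<le> Th 0 xs" using x0min[OF xs] unfolding m0_def .
      ultimately show False using e by simp
    qed
    have atl: "at ts within {0..ts} = at_left ts" using at_within_Icc_at_left[OF tspos] .
    have atts: "Th ts y \<ge> m0 - e * (1 + ts)" if y: "y \<in> {1..a}" for y
    proof (rule ccontr)
      assume "\<not> ?thesis"
      then have lt: "Th ts y + e * (1 + ts) < m0" by simp
      from DERIV_subset[OF Tht[OF tsD y] sub_dom[OF tsD]] have "continuous (at ts within {0..ts}) (\<lambda>s. Th s y)" by (rule DERIV_continuous)
      then have "continuous (at_left ts) (\<lambda>s. Th s y + e * (1 + s))"
        unfolding atl[symmetric] by (intro continuous_intros)
      then have "((\<lambda>s. Th s y + e * (1 + s)) \<longlongrightarrow> Th ts y + e * (1 + ts)) (at_left ts)"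
        by (simp add: continuous_within)
      then have ev1: "eventually (\<lambda>s. Th s y + e * (1 + s) < m0) (at_left ts)"
        using lt by (rule order_tendstoD(2))
      have ev2: "eventually (\<lambda>s. s \<in> {0<..<ts}) (at_left ts)"
        using eventually_at_left_real[OF tspos] .
      have "eventually (\<lambda>s. False) (at_left ts)"
        using eventually_conj[OF ev1 ev2]
      proof (rule eventually_mono)
        fix s assume "Th s y + e * (1 + s) < m0 \<and> s \<in> {0<..<ts}"
        then show False using below[of s y] y by auto
      qed
      then show False by simp
    qed
    have xsmin: "Th ts xs \<le> Th ts y" if "y \<in> {1..a}" for y
      using atts[OF that] badz by simp
    define Tt where "Tt = c * (inverse (1 + (f ts xs / xs)\<^sup>2) * ((ft ts xs * xs - f ts xs * 0) / (xs * xs)))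
        + inverse (1 + (fx ts xs)\<^sup>2) * D 1 1 ts xs"
    have Tt_le: "Tt \<le> - e"
    proof -
      have "((\<lambda>s. Th s xs) has_real_derivative Tt) (at ts within {0..ts})"
        unfolding Tt_def by (rule DERIV_subset[OF Tht[OF tsD xs] sub_dom[OF tsD]])
      then have lim: "((\<lambda>s. (Th s xs - Th ts xs) / (s - ts)) \<longlongrightarrow> Tt) (at_left ts)"
        by (simp add: has_field_derivative_iff atl)
      have "eventually (\<lambda>s. (Th s xs - Th ts xs) / (s - ts) \<le> - e) (at_left ts)"
        using eventually_at_left_real[OF tspos]
      proof (rule eventually_mono)
        fix s assume s: "s \<in> {0<..<ts}"
        then have "Th s xs > m0 - e * (1 + s)" using below[OF _ _ xs] by auto
        then have "Th s xs - Th ts xs > - e * (s - ts)" using badz by (simp add: algebra_simps)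
        moreover have "s - ts < 0" using s by simp
        ultimately show "(Th s xs - Th ts xs) / (s - ts) \<le> - e"
          by (simp add: neg_divide_le_eq)
      qed
      then show ?thesis using tendsto_upperbound[OF lim] by simp
    qed
    have Uxs: "ft ts xs = 0"
    proof -
      have fe: "ft ts xs = U xs * G ts xs"
        using flow tsD xs unfolding dom_def G_def c_def by blast
      show ?thesis
      proof (cases "xs = 1 \<or> xs = a")
        case True
        then show ?thesis using fe U_ends by auto
      next
        case False
        then have i: "1 < xs" "xs < a" using xs by auto
        have "(Th ts has_real_derivative G ts xs) (at xs within {1<..<a})"
          using DERIV_subset[OF Thx[OF tsD xs] greaterThanLessThan_subseteq_atLeastAtMost_iff[THEN iffD2]] by simp
        then have dd: "DERIV (Th ts) xs :> G ts xs" using at_within_open[of xs "{1<..<a}"] i by simp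
        have "G ts xs = 0"
        proof (rule DERIV_local_min[OF dd])
          show "0 < min (xs - 1) (a - xs)" using i by simp
          show "\<forall>y. \<bar>xs - y\<bar> < min (xs - 1) (a - xs) \<longrightarrow> Th ts xs \<le> Th ts y"
          proof (intro allI impI)
            fix y assume "\<bar>xs - y\<bar> < min (xs - 1) (a - xs)"
            then have "y \<in> {1..a}" by (auto simp: abs_less_iff)
            then show "Th ts xs \<le> Th ts y" by (rule xsmin)
          qed
        qed
        then show ?thesis using fe by simp
      qed
    qed
    have D11neg: "D 1 1 ts xs < 0"
    proof -
      have "inverse (1 + (fx ts xs)\<^sup>2) * D 1 1 ts xs \<le> - e" using Tt_le Uxs unfolding Tt_def by simp
      moreover have "inverse (1 + (fx ts xs)\<^sup>2) > 0" by (simp add: add_pos_nonneg)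
      ultimately show ?thesis using e by (smt (verit) mult_nonneg_nonneg)
    qed
    have flow_eq: "ft ts y = U y * G ts y" if "y \<in> {1..a}" for y
      using flow tsD that unfolding dom_def G_def c_def by blast
    have ThD: "DERIV (Th ts) y :> G ts y" if "1 < y" "y < a" for y
    proof -
      have "(Th ts has_real_derivative G ts y) (at y within {1<..<a})"
        using DERIV_subset[OF Thx[OF tsD, of y] greaterThanLessThan_subseteq_atLeastAtMost_iff[THEN iffD2]] that by simp
      then show ?thesis using at_within_open[of y "{1<..<a}"] that by simp
    qed
    have Gq: "G ts y = ft ts y / U y" if "1 < y" "y < a" for y
    proof -
      have "U y > 0" using U_pos that by simp
      then show ?thesis using flow_eq[of y] that by simp
    qed
    have hd: "(ft ts has_real_derivative D 1 1 ts xs) (at xs within {1..a})"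
    proof (rule has_field_derivative_transform_within)
      show "((\<lambda>y. D 1 0 ts y) has_real_derivative D 1 1 ts xs) (at xs within {1..a})" using Dx[OF tsD xs, of 1 0] by simp
      show "(0::real) < 1" by simp
      show "xs \<in> {1..a}" by (rule xs)
      show "D 1 0 ts y = ft ts y" if "y \<in> {1..a}" "dist y xs < 1" for y using ftD[OF tsD tspos that(1)] by simp
    qed
    show False
    proof (cases "xs < a")
      case True
      have sub: "{xs..a} \<subseteq> {1..a}" using xs by auto
      have lim: "((\<lambda>y. (ft ts y - ft ts xs) / (y - xs)) \<longlongrightarrow> D 1 1 ts xs) (at_right xs)"
        using DERIV_subset[OF hd sub] True by (simp add: has_field_derivative_iff at_within_Icc_at_right)
      have "eventually (\<lambda>y. (ft ts y - ft ts xs) / (y - xs) < 0) (at_right xs)"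
        using lim D11neg by (rule order_tendstoD(2))
      then have "\<exists>b>xs. \<forall>y>xs. y < b \<longrightarrow> (ft ts y - ft ts xs) / (y - xs) < 0"
        by (rule iffD1[OF eventually_at_right[OF True]])
      then obtain b where b: "b > xs" and bq0: "\<forall>y>xs. y < b \<longrightarrow> (ft ts y - ft ts xs) / (y - xs) < 0"
        by blast
      have bq: "(ft ts y - ft ts xs) / (y - xs) < 0" if "y > xs" "y < b" for y using bq0 that by blast
      define y1 where "y1 = (xs + min b a) / 2"
      have y1: "xs < y1" "y1 < b" "y1 < a" using b True unfolding y1_def by auto
      have "Th ts xs > Th ts y1"
      proof (rule DERIV_neg_imp_decreasing_open[OF y1(1)])
        fix z assume z: "xs < z" "z < y1"
        have z1: "1 < z" "z < a" using z xs y1 by auto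
        have "(ft ts z - ft ts xs) / (z - xs) < 0" by (rule bq) (use z y1 in linarith)+
        then have "ft ts z < 0" using Uxs z by (simp add: divide_less_0_iff)
        moreover have "U z > 0" using U_pos z1 by simp
        ultimately have "G ts z < 0" using Gq[OF z1] by (simp add: divide_neg_pos)
        then show "\<exists>y. DERIV (Th ts) z :> y \<and> y < 0" using ThD[OF z1] by blast
      next
        show "continuous_on {xs..y1} (Th ts)"
          by (rule continuous_on_subset[OF Thcont[OF tsD]]) (use xs y1 in auto)
      qed
      moreover have "Th ts xs \<le> Th ts y1" by (rule xsmin) (use y1 xs in auto)
      ultimately show False by simp
    next
      case False
      then have xa: "xs = a" using xs by auto
      have lim: "((\<lambda>y. (ft ts y - ft ts xs) / (y - xs)) \<longlongrightarrow> D 1 1 ts xs) (at_left xs)"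
        using hd xa a1 by (simp add: has_field_derivative_iff at_within_Icc_at_left)
      have ev: "eventually (\<lambda>y. (ft ts y - ft ts xs) / (y - xs) < 0) (at_left xs)"
        using lim D11neg by (rule order_tendstoD(2))
      have one: "1 < xs" using xa a1 by simp
      from ev have "\<exists>b<xs. \<forall>y>b. y < xs \<longrightarrow> (ft ts y - ft ts xs) / (y - xs) < 0"
        by (rule iffD1[OF eventually_at_left[OF one]])
      then obtain b where b: "b < xs" and bq0: "\<forall>y>b. y < xs \<longrightarrow> (ft ts y - ft ts xs) / (y - xs) < 0"
        by blast
      have bq: "(ft ts y - ft ts xs) / (y - xs) < 0" if "y > b" "y < xs" for y using bq0 that by blast
      define y1 where "y1 = (max b 1 + a) / 2"
      have y1: "y1 < xs" "b < y1" "1 < y1" using b xa a1 unfolding y1_def by auto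
      have "Th ts y1 < Th ts xs"
      proof (rule DERIV_pos_imp_increasing_open[OF y1(1)])
        fix z assume z: "y1 < z" "z < xs"
        have z1: "1 < z" "z < a" using z xa y1 by auto
        have "(ft ts z - ft ts xs) / (z - xs) < 0" by (rule bq) (use z y1 in linarith)+
        then have "ft ts z > 0" using Uxs z by (simp add: divide_less_0_iff)
        moreover have "U z > 0" using U_pos z1 by simp
        ultimately have "G ts z > 0" using Gq[OF z1] by simp
        then show "\<exists>y. DERIV (Th ts) z :> y \<and> y > 0" using ThD[OF z1] by blast
      next
        show "continuous_on {y1..xs} (Th ts)"
          by (rule continuous_on_subset[OF Thcont[OF tsD]]) (use xa y1 in auto)
      qed
      moreover have "Th ts xs \<le> Th ts y1" by (rule xsmin) (use y1 xa in auto)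
      ultimately show False by simp
    qed
  qed
  have main2: "Th t x \<ge> m0" if t: "t \<in> dom" and x: "x \<in> {1..a}" for t x
  proof (rule ccontr)
    assume "\<not> ?thesis"
    then have "Th t x < m0" by simp
    moreover have "t \<ge> 0" using t dom_iff by simp
    ultimately have "Th t x > m0 - ((m0 - Th t x) / (1 + t)) * (1 + t)"
      using main[OF _ t x, of "(m0 - Th t x) / (1 + t)"] by simp
    then show False using \<open>t \<ge> 0\<close> by simp
  qed
  define del where "del = min (m0 - (real n - 2) * (pi / 2)) 1"
  have del_pos: "del > 0" and del_le: "del \<le> 1" using m0_gt unfolding del_def by auto
  have pi_gt: "pi > 2" using pi_gt3 by simp
  have low: "arctan (fx t x) > del - pi / 2" if t: "t \<in> dom" and x: "x \<in> {1..a}" for t x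
  proof -
    have "c * arctan (f t x / x) < c * (pi / 2)" using c_pos arctan_ubound by simp
    moreover have "c * (pi / 2) = (real n - 2) * (pi / 2) + pi / 2" unfolding c_def by (simp add: field_simps)
    ultimately show ?thesis using main2[OF t x] unfolding Th_def del_def by linarith
  qed
  show ?thesis
  proof (intro exI ballI)
    fix t x assume t: "t \<in> time_dom T" and x: "x \<in> {1..a}"
    have "arctan (tan (del - pi / 2)) = del - pi / 2"
      using del_pos del_le pi_gt by (intro arctan_tan) auto
    then have "arctan (tan (del - pi / 2)) < arctan (fx t x)" using low[OF _ x] t dom_def by simp
    then show "fx t x > - (- tan (del - pi / 2))" by (simp add: arctan_less_iff)
  qed
qed

end
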